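(* Let $n$ be a positive integer and $\alpha,\beta$ non-negative real numbers with $\beta\neq 0$. Let $Q\in\mathcal{H}[1,n]$ satisfy $$Q(z)\prec 1+z+\frac{nz}{\beta+\alpha(1+z)}.$$ If $p\in\mathcal{H}[1,n]$ satisfies the differential equation $$p(z)Q(z)+\frac{zp'(z)}{\beta p(z)+\alpha}=1\qquad(z\in\mathbb{D}),$$ then $p(z)\prec \dfrac{1}{1+z}$.
   Context: $\mathbb{D}$ is the open unit disk. $\mathcal{H}[1,n]$ is the class of functions analytic in $\mathbb{D}$ of the form $1+a_nz^n+a_{n+1}z^{n+1}+\cdots$. $f\prec F$ means $f=F\circ\omega$ for some analytic $\omega:\mathbb{D}\to\mathbb{D}$ with $\omega(0)=0$. *)

theory Defs
  imports "HOL-Complex_Analysis.Complex_Analysis"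
begin

text \<open>The class H[1,n]: analytic in the unit disk, of the form 1 + a_n z^n + ...,
  i.e. f(0) = 1 and the derivatives of orders 1,...,n-1 vanish at 0.\<close>
definition H1 :: "nat \<Rightarrow> (complex \<Rightarrow> complex) set" where
  "H1 n = {f. f holomorphic_on ball 0 1 \<and> f 0 = 1 \<and>
              (\<forall>k. 1 \<le> k \<and> k < n \<longrightarrow> (deriv ^^ k) f 0 = 0)}"

definition subordinate :: "(complex \<Rightarrow> complex) \<Rightarrow> (complex \<Rightarrow> complex) \<Rightarrow> bool"
  (infix "\<prec>" 50) where
  "f \<prec> F \<longleftrightarrow> (\<exists>\<omega>. \<omega> holomorphic_on ball 0 1 \<and> \<omega> ` ball 0 1 \<subseteq> ball 0 1 \<and>
        \<omega> 0 = 0 \<and> (\<forall>z\<in>ball 0 1. f z = F (\<omega> z)))"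

end

theory Submission
  imports Defs
begin


lemma factor_H1:
  fixes p :: "complex \<Rightarrow> complex"
  assumes hol: "p holomorphic_on ball 0 1" and p0: "p 0 = 1"
    and dz: "\<forall>k. 1 \<le> k \<and> k < n \<longrightarrow> (deriv ^^ k) p 0 = 0" and n1: "n \<ge> 1"
  obtains k where "k holomorphic_on ball 0 1" "\<And>z. z \<in> ball 0 1 \<Longrightarrow> p z - 1 = z^n * k z"
proof -
  define c where "c j = (deriv ^^ j) p 0 / fact j" for j
  define k where "k z = (if z = 0 then c n else (p z - 1) / z^n)" for z
  have ps: "(\<lambda>j. c j * z^j) sums p z" if "z \<in> ball 0 1" for z
    using holomorphic_power_series[OF hol that] by (simp add: c_def)
  have init: "(\<Sum>i<n. c i * z^i) = (if n = 0 then 0 else 1)" for z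
  proof (cases n)
    case 0 then show ?thesis by simp
  next
    case (Suc m)
    have "(\<Sum>i<Suc m. c i * z^i) = c 0 * z^0 + (\<Sum>i\<in>{1..m}. c i * z^i)"
      by (simp add: lessThan_Suc_atMost atMost_atLeast0 sum.atLeast_Suc_atMost)
    also have "(\<Sum>i\<in>{1..m}. c i * z^i) = 0"
      using dz Suc by (intro sum.neutral) (auto simp: c_def)
    finally show ?thesis using Suc p0 by (simp add: c_def)
  qed
  have "(\<lambda>j. c (j + n) * (z - 0)^j) sums k z" if z: "z \<in> ball 0 1" for z
  proof (cases "z = 0")
    case True
    have "(\<lambda>j. c (j + n) * (z - 0)^j) = (\<lambda>j. if j = 0 then c n else 0)"
      using True by (auto simp: fun_eq_iff)
    then show ?thesis using True sums_single[of 0 "\<lambda>_. c n"] by (simp add: k_def)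
  next
    case False
    have "(\<lambda>j. c (j + n) * z^(j+n)) sums (p z - (\<Sum>i<n. c i * z^i))"
      using sums_split_initial_segment[OF ps[OF z]] by simp
    moreover have "p z - (\<Sum>i<n. c i * z^i) = p z - 1"
      using init n1 by simp
    ultimately have "(\<lambda>j. c (j + n) * z^(j+n) / z^n) sums ((p z - 1) / z^n)"
      by (intro sums_divide) simp
    then show ?thesis using False by (simp add: k_def power_add)
  qed
  then have "k holomorphic_on ball 0 1" by (intro power_series_holomorphic) auto
  moreover have "p z - 1 = z^n * k z" if "z \<in> ball 0 1" for z
  proof (cases "z = 0")
    case True
    then show ?thesis
      using n1 p0 by simp
  qed (simp add: k_def)
  ultimately show ?thesis using that by blast
qed



lemma small_step:
  fixes d :: complex and h :: real
  assumes "Re d < 0" "h > 0" "h \<le> - Re d / (cmod d)^2"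
  shows "cmod (1 + of_real h * d) \<le> 1"
proof -
  have d0: "d \<noteq> 0" using assms by auto
  have nd: "(cmod d)^2 = (Re d)^2 + (Im d)^2" by (simp add: cmod_power2)
  have pos: "(cmod d)^2 > 0" using d0 by simp
  have "h * (cmod d)^2 \<le> - Re d" using assms pos by (simp add: field_simps)
  then have "h * h * (cmod d)^2 \<le> h * (- Re d)" using assms(2)
    by (metis mult.assoc mult_le_cancel_left_pos)
  then have "h*h*((Re d)^2 + (Im d)^2) \<le> - h * Re d" using nd by simp
  moreover have "(cmod (1 + of_real h * d))^2 = (1 + h * Re d)^2 + (h * Im d)^2"
    by (simp add: cmod_power2)
  ultimately have "(cmod (1 + of_real h * d))^2 \<le> 1 + h * Re d"
    by (simp add: power2_eq_square algebra_simps)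
  also have "\<dots> \<le> 1" using mult_pos_neg[OF assms(2) assms(1)] by simp
  finally show ?thesis by (simp add: power_le_one_iff abs_le_square_iff)
qed

lemma jack_dir:
  fixes g :: "complex \<Rightarrow> complex"
  assumes hol: "g holomorphic_on U" and U: "open U" "cball 0 r \<subseteq> U"
    and z0: "cmod z0 = r" "r > 0" and mx: "\<forall>z\<in>cball 0 r. cmod (g z) \<le> cmod (g z0)"
    and g0: "g z0 \<noteq> 0" and d: "Re d < 0"
  shows "Re (z0 * deriv g z0 / g z0 * d) \<le> 0"
proof (rule ccontr)
  assume "\<not> ?thesis"
  then have pos: "Re (z0 * deriv g z0 / g z0 * d) > 0" by simp
  define \<psi> where "\<psi> x = Re (g (z0 + of_real x * (z0 * d)) / g z0)" for x :: real
  have z0U: "z0 \<in> U" using U z0 by auto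
  have gd: "(g has_field_derivative deriv g z0) (at z0)"
    using hol U z0U holomorphic_derivI by blast
  have i: "((\<lambda>x. z0 + x * (z0 * d)) has_field_derivative (z0*d)) (at 0)"
    by (auto intro!: derivative_eq_intros)
  have gd': "(g has_field_derivative deriv g z0) (at (z0 + 0 * (z0*d)))" using gd by simp
  have "((\<lambda>x. g (z0 + x * (z0 * d)) / g z0) has_field_derivative
          (deriv g z0 * (z0 * d) / g z0)) (at (of_real 0))"
    using DERIV_cdivide[OF DERIV_chain2[OF gd' i], of "g z0"] by simp
  from has_vector_derivative_real_field[OF this, of UNIV]
  have "((\<lambda>x. g (z0 + of_real x * (z0 * d)) / g z0) has_vector_derivative
          (deriv g z0 * (z0 * d) / g z0)) (at 0)" by simp
  then have "((\<lambda>x. Re (g (z0 + of_real x * (z0 * d)) / g z0)) has_field_derivative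
          Re (deriv g z0 * (z0 * d) / g z0)) (at 0)"
    by (rule has_field_derivative_Re)  
  then have "DERIV \<psi> 0 :> Re (z0 * deriv g z0 / g z0 * d)"
    unfolding \<psi>_def by (simp add: field_simps)
  from DERIV_pos_inc_right[OF this pos] obtain \<delta> where
    \<delta>: "\<delta> > 0" "\<And>h. h > 0 \<Longrightarrow> h < \<delta> \<Longrightarrow> \<psi> 0 < \<psi> (0 + h)" by blast
  have d0: "d \<noteq> 0" using d by auto
  define h where "h = min (\<delta>/2) (- Re d / (cmod d)^2)"
  have "(cmod d)^2 > 0" using d0 by simp
  from divide_neg_pos[OF d this] have "- Re d / (cmod d)^2 > 0" by simp
  then have hpos: "h > 0" using \<delta> by (simp add: h_def)
  have hle: "h \<le> - Re d / (cmod d)^2" by (simp add: h_def)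
  have "\<psi> 0 < \<psi> h" using \<delta>(2)[OF hpos] \<delta>(1) by (simp add: h_def)
  moreover have "\<psi> 0 = 1" using g0 by (simp add: \<psi>_def)
  moreover have "\<psi> h \<le> 1"
  proof -
    have "z0 + of_real h * (z0 * d) = z0 * (1 + of_real h * d)" by (simp add: algebra_simps)
    moreover have "cmod (z0 * (1 + of_real h * d)) \<le> r"
      using small_step[OF d hpos hle] z0 by (simp add: norm_mult mult_le_one)
    ultimately have "cmod (g (z0 + of_real h * (z0 * d))) \<le> cmod (g z0)"
      using mx by auto
    then have "cmod (g (z0 + of_real h * (z0 * d)) / g z0) \<le> 1"
      using g0 by (simp add: norm_divide divide_le_eq_1)
    then show ?thesis unfolding \<psi>_def using complex_Re_le_cmod order_trans by blast
  qed
  ultimately show False by simp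
qed

lemma jack_core:
  fixes g :: "complex \<Rightarrow> complex"
  assumes hol: "g holomorphic_on U" and U: "open U" "cball 0 r \<subseteq> U"
    and z0: "cmod z0 = r" "r > 0" and mx: "\<forall>z\<in>cball 0 r. cmod (g z) \<le> cmod (g z0)"
    and g0: "g z0 \<noteq> 0"
  shows "\<exists>L\<ge>0. z0 * deriv g z0 / g z0 = of_real L"
proof -
  define c where "c = z0 * deriv g z0 / g z0"
  have D: "Re (c * d) \<le> 0" if "Re d < 0" for d
    using jack_dir[OF assms that] by (simp add: c_def)
  have re: "Re c \<ge> 0" using D[of "-1"] by simp
  have im: "Im c = 0"
  proof (rule ccontr)
    assume ne: "Im c \<noteq> 0"
    define y where "y = - (Re c + 1) / Im c"
    have "Re (c * Complex (-1) y) \<le> 0" using D[of "Complex (-1) y"] by simp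
    then have "- Re c - Im c * y \<le> 0" by simp
    moreover have "Im c * y = - (Re c + 1)" using ne by (simp add: y_def)
    ultimately show False by simp
  qed
  have "c = of_real (Re c)" using im by (simp add: complex_eq_iff)
  then show ?thesis using re c_def by blast
qed


lemma final_alg:
  fixes P D z0 \<zeta> Q0 :: complex and \<alpha> \<beta> m nn :: real
  assumes P0: "P \<noteq> 0" and ReP: "Re P = 1/2" and \<zeta>: "cmod \<zeta> < 1" and \<beta>: "\<beta> > 0" and \<alpha>: "\<alpha> \<ge> 0"
    and mn: "m \<ge> nn" and nn: "nn \<ge> 0"
    and jk: "z0 * D = - of_real m * (1/P - 1) * P^2"
    and eq: "P * Q0 + z0 * D / (of_real \<beta> * P + of_real \<alpha>) = 1"
    and Q0: "Q0 = 1 + \<zeta> + of_real nn * \<zeta> / (of_real \<beta> + of_real \<alpha> * (1 + \<zeta>))"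
  shows False
proof -
  define s where "s = 1/P - 1"
  have c1: "(cmod (1 - P))^2 = (1 - Re P)^2 + (Im P)^2" by (simp add: cmod_power2)
  have c2: "(cmod P)^2 = (Re P)^2 + (Im P)^2" by (simp add: cmod_power2)
  have "(cmod (1 - P))^2 = (cmod P)^2" unfolding c1 c2 ReP by (simp add: power2_eq_square)
  then have "cmod (1 - P) = cmod P" by (simp add: power2_eq_iff_nonneg)
  then have s1: "cmod s = 1" using P0 by (simp add: s_def norm_divide diff_divide_distrib[symmetric] field_simps)
  have Ps: "P * (1 + s) = 1" using P0 by (simp add: s_def field_simps)
  define A where "A = of_real \<beta> + of_real \<alpha> * (1 + s)"
  define B where "B = of_real \<beta> + of_real \<alpha> * (1 + \<zeta>)"
  have "Re s \<ge> -1" using s1 abs_Re_le_cmod[of s] by simp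
  then have ReA: "Re A > 0" using \<alpha> \<beta> by (simp add: A_def) (smt (verit) mult_nonneg_nonneg)
  have "Re \<zeta> > -1" using \<zeta> abs_Re_le_cmod[of \<zeta>] by simp
  then have ReB: "Re B > 0" using \<alpha> \<beta> by (simp add: B_def) (smt (verit) mult_nonneg_nonneg)
  have A0: "A \<noteq> 0" and B0: "B \<noteq> 0" using ReA ReB by auto
  have s0: "s \<noteq> 0" using s1 by auto
  have den: "of_real \<beta> * P + of_real \<alpha> = P * A"
  proof -
    have "of_real \<alpha> = of_real \<alpha> * (P * (1 + s))" using Ps by simp
    then show ?thesis unfolding A_def by (simp add: algebra_simps)
  qed
  have "P * Q0 - of_real m * s * P / A = 1"
    using eq jk den P0 A0 by (simp add: s_def power2_eq_square) (simp add: field_simps)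
  then have "(1 + s) * (P * Q0 - of_real m * s * P / A) = 1 + s" by simp
  moreover have "(1 + s) * (P * Q0 - of_real m * s * P / A) = (P * (1 + s)) * Q0 - of_real m * s * (P * (1 + s)) / A"
    using A0 by (simp add: field_simps)
  ultimately have "Q0 - of_real m * s / A = 1 + s" unfolding Ps by simp
  then have e1: "s + of_real m * s / A = \<zeta> + of_real nn * \<zeta> / B" using Q0 by (simp add: B_def algebra_simps)
  then have E: "s * A * B + of_real m * s * B = \<zeta> * A * B + of_real nn * \<zeta> * A"
    using A0 B0 by (simp add: field_simps)
  have F: "\<zeta> * A - s * B = of_real (\<beta> + \<alpha>) * (\<zeta> - s)" by (simp add: A_def B_def algebra_simps)
  have "(\<zeta> - s) * (A * B + of_real nn * of_real (\<beta> + \<alpha>)) = (\<zeta> - s) * A * B + of_real nn * (of_real (\<beta> + \<alpha>) * (\<zeta> - s))"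
    by (simp add: algebra_simps)
  also have "\<dots> = (\<zeta> - s) * A * B + of_real nn * (\<zeta> * A - s * B)" by (simp only: F)
  also have "\<dots> = (\<zeta> * A * B + of_real nn * \<zeta> * A) - s * A * B - of_real nn * s * B"
    by (simp add: algebra_simps)
  also have "\<dots> = (s * A * B + of_real m * s * B) - s * A * B - of_real nn * s * B" by (simp only: E)
  also have "\<dots> = of_real (m - nn) * s * B" by (simp add: algebra_simps)
  finally have key: "(\<zeta> - s) * (A * B + of_real nn * of_real (\<beta> + \<alpha>)) = of_real (m - nn) * s * B" .
  define u where "u = \<zeta> / s"
  define X where "X = A + of_real nn * of_real (\<beta> + \<alpha>) / B"
  have uX: "(u - 1) * X = of_real (m - nn)"
  proof -
    have zs: "\<zeta> - s = s * (u - 1)" using s0 by (simp add: u_def field_simps)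
    have XB: "A * B + of_real nn * of_real (\<beta> + \<alpha>) = X * B" using B0 by (simp add: X_def field_simps)
    have H: "s * (u - 1) * (X * B) = of_real (m - nn) * s * B" using key by (simp only: XB zs)
    have "(s * B) * ((u - 1) * X) = (s * B) * of_real (m - nn)" using H by (simp only: mult_ac)
    moreover have "s * B \<noteq> 0" using s0 B0 by simp
    ultimately show ?thesis by simp
  qed
  have "(Re B)^2 + (Im B)^2 > 0" using ReB by (simp add: add_pos_nonneg)
  then have "Re (1 / B) > 0" using ReB by (simp add: Re_divide divide_pos_pos)
  then have "Re (of_real nn * of_real (\<beta> + \<alpha>) / B) \<ge> 0"
  proof -
    have e: "of_real nn * of_real (\<beta> + \<alpha>) / B = of_real (nn * (\<beta> + \<alpha>)) * (1 / B)" by simp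
    have "0 \<le> nn * (\<beta> + \<alpha>) * Re (1 / B)" using nn \<alpha> \<beta> \<open>Re (1 / B) > 0\<close> by simp
    moreover have r: "Re (complex_of_real c * z) = c * Re z" for c z by simp
    ultimately show ?thesis by (simp only: e r)
  qed
  then have ReX: "Re X > 0" using ReA by (simp add: X_def)
  have "cmod u < 1" using \<zeta> s1 by (simp add: u_def norm_divide)
  then have Reu: "Re (u - 1) < 0" using complex_Re_le_cmod[of u] by simp
  have "Re ((u - 1) * X * cnj X) = Re (u - 1) * (cmod X)^2"
    by (simp add: mult.assoc complex_mult_cnj cmod_power2)
  also have "\<dots> < 0"
  proof -
    have "X \<noteq> 0" using ReX by auto
    then have "(cmod X)^2 > 0" by simp
    then show ?thesis using mult_neg_pos[OF Reu] by blast
  qed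
  finally have "Re ((u - 1) * X * cnj X) < 0" .
  moreover have "Re ((u - 1) * X * cnj X) = (m - nn) * Re X" using uX by simp
  moreover have "(m - nn) * Re X \<ge> 0" using mn ReX by simp
  ultimately show False by simp
qed

lemma nrm_sq:
  fixes P :: complex assumes "P \<noteq> 0"
  shows "(cmod (1/P - 1))^2 * (cmod P)^2 = (cmod P)^2 + 1 - 2 * Re P"
proof -
  have "1/P - 1 = (1 - P) / P" using assms by (simp add: field_simps)
  then have "(cmod (1/P - 1))^2 * (cmod P)^2 = (cmod (1 - P))^2"
    using assms by (simp add: norm_divide power_divide)
  also have "\<dots> = (1 - Re P)^2 + (Im P)^2" by (simp add: cmod_power2)
  also have "\<dots> = ((Re P)^2 + (Im P)^2) + 1 - 2 * Re P" by (simp add: power2_eq_square algebra_simps)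
  also have "(Re P)^2 + (Im P)^2 = (cmod P)^2" by (simp add: cmod_power2)
  finally show ?thesis .
qed

lemma nrm_le: fixes P :: complex assumes "P \<noteq> 0"
  shows "cmod (1/P - 1) \<le> 1 \<longleftrightarrow> Re P \<ge> 1/2"
proof -
  have pos: "(cmod P)^2 > 0" using assms by simp
  have "cmod (1/P - 1) \<le> 1 \<longleftrightarrow> (cmod (1/P - 1))^2 \<le> 1"
    using abs_square_le_1[of "cmod (1/P - 1)"] by simp
  also have "\<dots> \<longleftrightarrow> (cmod (1/P - 1))^2 * (cmod P)^2 \<le> (cmod P)^2"
    using pos by simp
  also have "\<dots> \<longleftrightarrow> Re P \<ge> 1/2" unfolding nrm_sq[OF assms] by (simp add: algebra_simps)
  finally show ?thesis .
qed

lemma nrm_lt: fixes P :: complex assumes "P \<noteq> 0"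
  shows "cmod (1/P - 1) < 1 \<longleftrightarrow> Re P > 1/2"
proof -
  have pos: "(cmod P)^2 > 0" using assms by simp
  have "cmod (1/P - 1) < 1 \<longleftrightarrow> (cmod (1/P - 1))^2 < 1"
    using abs_square_less_1[of "cmod (1/P - 1)"] by simp
  also have "\<dots> \<longleftrightarrow> (cmod (1/P - 1))^2 * (cmod P)^2 < (cmod P)^2"
    using pos by simp
  also have "\<dots> \<longleftrightarrow> Re P > 1/2" unfolding nrm_sq[OF assms] by (simp add: algebra_simps)
  finally show ?thesis .
qed

theorem mainTheorem7:
  fixes n :: nat and \<alpha> \<beta> :: real and p Q :: "complex \<Rightarrow> complex"
  assumes "n \<ge> 1" and "\<alpha> \<ge> 0" and "\<beta> \<ge> 0" and "\<beta> \<noteq> 0"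
    and "Q \<in> H1 n"
    and "Q \<prec> (\<lambda>z. 1 + z + of_nat n * z / (of_real \<beta> + of_real \<alpha> * (1 + z)))"
    and "p \<in> H1 n"
    and "\<forall>z\<in>ball 0 1. p z * Q z + z * deriv p z / (of_real \<beta> * p z + of_real \<alpha>) = 1"
  shows "p \<prec> (\<lambda>z. 1 / (1 + z))"
proof -
  note n1 = assms(1) and \<alpha> = assms(2)
  have \<beta>: "\<beta> > 0" using assms(3,4) by simp
  have holp: "p holomorphic_on ball 0 1" and p0: "p 0 = 1"
    and dz: "\<forall>k. 1 \<le> k \<and> k < n \<longrightarrow> (deriv ^^ k) p 0 = 0"
    using assms(7) by (auto simp: H1_def)
  obtain \<omega> where \<omega>hol: "\<omega> holomorphic_on ball 0 1" and \<omega>D: "\<omega> ` ball 0 1 \<subseteq> ball 0 1"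
    and \<omega>0: "\<omega> 0 = 0"
    and Q\<omega>: "\<forall>z\<in>ball 0 1. Q z = 1 + \<omega> z + of_nat n * \<omega> z / (of_real \<beta> + of_real \<alpha> * (1 + \<omega> z))"
    using assms(6) unfolding subordinate_def by blast
  have eqn: "\<And>z. z \<in> ball 0 1 \<Longrightarrow> p z * Q z + z * deriv p z / (of_real \<beta> * p z + of_real \<alpha>) = 1"
    using assms(8) by blast
  have contp: "continuous_on (ball 0 1) p" using holp holomorphic_on_imp_continuous_on by blast
  have RE: "\<forall>z\<in>ball 0 1. Re (p z) > 1/2"
  proof (rule ccontr)
    assume "\<not> ?thesis"
    then obtain z1 where z1: "z1 \<in> ball 0 1" "Re (p z1) \<le> 1/2" by (auto simp: not_less)
    define K where "K = cball 0 (cmod z1) \<inter> (\<lambda>z. Re (p z)) -` {..1/2}"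
    have sub1: "cball 0 (cmod z1) \<subseteq> ball 0 1" using z1 by auto
    have "continuous_on (cball 0 (cmod z1)) (\<lambda>z. Re (p z))"
      using continuous_on_subset[OF contp sub1] by (intro continuous_intros)
    then have "closed K" unfolding K_def by (intro continuous_closed_preimage) auto
    then have "compact K" using bounded_Int[of "cball 0 (cmod z1)"] unfolding K_def by (simp add: compact_eq_bounded_closed)
    moreover have "z1 \<in> K" using z1 by (simp add: K_def)
    ultimately obtain z0 where z0K: "z0 \<in> K" and z0min: "\<forall>y\<in>K. cmod z0 \<le> cmod y"
      using continuous_attains_inf[of K norm] by (auto intro: continuous_intros)
    define r where "r = cmod z0"
    have "z0 \<noteq> 0" using z0K p0 by (auto simp: K_def)
    then have r0: "r > 0" by (simp add: r_def)
    have r1: "r < 1" using z0K z1 by (auto simp: K_def r_def)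
    have cb: "cball 0 r \<subseteq> ball 0 1" using r1 by auto
    have inner: "Re (p z) > 1/2" if "z \<in> ball 0 r" for z
    proof (rule ccontr)
      assume "\<not> ?thesis"
      then have "z \<in> K" using that z0K by (auto simp: K_def r_def)
      then show False using z0min that by (auto simp: r_def)
    qed
    have closedge: "Re (p z) \<ge> 1/2" if "z \<in> cball 0 r" for z
    proof -
      have "continuous_on (closure (ball 0 r)) (\<lambda>z. Re (p z))"
        using continuous_on_subset[OF contp cb] r0 by (simp add: continuous_intros)
      then show ?thesis using continuous_ge_on_closure[of "ball 0 r" "\<lambda>z. Re (p z)" z "1/2"]
        inner that r0 by (simp add: less_imp_le)
    qed
    have z0c: "z0 \<in> cball 0 r" by (simp add: r_def)
    have Rez0: "Re (p z0) = 1/2" using closedge[OF z0c] z0K by (simp add: K_def)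
    define U where "U = ball 0 1 \<inter> (\<lambda>z. Re (p z)) -` {1/4<..}"
    have openU: "open U" unfolding U_def
      by (intro continuous_open_preimage continuous_intros contp) auto
    have cbU: "cball 0 r \<subseteq> U"
    proof
      fix z :: complex assume zc: "z \<in> cball 0 r"
      then have "z \<in> ball 0 1" "Re (p z) \<ge> 1/2" using subsetD[OF cb zc] closedge[OF zc] by auto
      then show "z \<in> U" by (simp add: U_def)
    qed
    have pnz: "p z \<noteq> 0" if "z \<in> U" for z using that by (auto simp: U_def)
    have UD: "U \<subseteq> ball 0 1" by (auto simp: U_def)
    obtain k where holk: "k holomorphic_on ball 0 1" and kf: "\<And>z. z \<in> ball 0 1 \<Longrightarrow> p z - 1 = z^n * k z"
      using factor_H1[OF holp p0 dz n1] by blast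
    define g where "g z = - k z / p z" for z
    have holg: "g holomorphic_on U" unfolding g_def
      using holomorphic_on_subset[OF holk UD] holomorphic_on_subset[OF holp UD] pnz
      by (intro holomorphic_intros) auto
    define w where "w z = z^n * g z" for z
    have wU: "w z = 1 / p z - 1" if "z \<in> U" for z
    proof -
      have "p z - 1 = z^n * k z" using kf that UD by auto
      then show ?thesis using pnz[OF that] by (simp add: w_def g_def field_simps)
    qed
    have wle: "cmod (w z) \<le> 1" if "z \<in> cball 0 r" for z
      using that cbU wU pnz nrm_le closedge by (metis subsetD)
    have P0: "p z0 \<noteq> 0" using z0c cbU pnz by auto
    have w0: "cmod (w z0) = 1"
    proof -
      have "(cmod (1/p z0 - 1))^2 * (cmod (p z0))^2 = (cmod (p z0))^2"
        using nrm_sq[OF P0] Rez0 by simp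
      then have "(cmod (1/p z0 - 1))^2 = 1" using P0 by simp
      then show ?thesis using wU z0c cbU by (metis norm_ge_zero power2_eq_1_iff subsetD abs_of_nonneg abs_square_eq_1)
    qed
    have rn: "r^n > 0" using r0 by simp
    have gmax: "\<forall>z\<in>cball 0 r. cmod (g z) \<le> cmod (g z0)"
    proof
      fix z :: complex assume zc: "z \<in> cball 0 r"
      have g0: "cmod (g z0) = 1 / r^n"
        using w0 rn \<open>z0 \<noteq> 0\<close> by (simp add: w_def norm_mult norm_power r_def eq_divide_eq mult.commute)
      show "cmod (g z) \<le> cmod (g z0)"
      proof (rule maximum_modulus_frontier[of g "cball 0 r"])
        show "g holomorphic_on interior (cball 0 r)"
          using holomorphic_on_subset[OF holg order_trans[OF ball_subset_cball cbU]] by simp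
        show "continuous_on (closure (cball 0 r)) g"
          using holomorphic_on_imp_continuous_on[OF holomorphic_on_subset[OF holg cbU]] by simp
        show "bounded (cball 0 r)" by simp
        show "z \<in> cball 0 r" by fact
        fix y :: complex assume "y \<in> frontier (cball 0 r)"
        then have yr: "cmod y = r" and yc: "y \<in> cball 0 r" using r0 by auto
        have "cmod (w y) = r^n * cmod (g y)" using yr by (simp add: w_def norm_mult norm_power)
        then have "r^n * cmod (g y) \<le> 1" using wle[OF yc] by simp
        then show "cmod (g y) \<le> cmod (g z0)" unfolding g0 using rn by (simp add: field_simps)
      qed
    qed
    have gz0: "g z0 \<noteq> 0" using w0 by (auto simp: w_def)
    obtain L where L0: "L \<ge> 0" and Lz: "z0 * deriv g z0 / g z0 = of_real L"
      using jack_core[OF holg openU cbU _ r0 gmax gz0] by (auto simp: r_def)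
    have z0U: "z0 \<in> U" using z0c cbU by auto
    have gd: "(g has_field_derivative deriv g z0) (at z0)"
      using holg openU z0U holomorphic_derivI by blast
    have pd: "(p has_field_derivative deriv p z0) (at z0)"
      using holp z0U UD holomorphic_derivI[of p "ball 0 1"] by auto
    have d1: "(w has_field_derivative (of_nat n * z0^(n-1) * g z0 + z0^n * deriv g z0)) (at z0)"
      unfolding w_def using gd by (auto intro!: derivative_eq_intros)
    have "((\<lambda>z. 1 / p z - 1) has_field_derivative (- deriv p z0 / (p z0)^2)) (at z0)"
      using pd P0 by (auto intro!: derivative_eq_intros simp: power2_eq_square divide_inverse)
    then have d2: "(w has_field_derivative (- deriv p z0 / (p z0)^2)) (at z0)"
      using has_field_derivative_transform_within_open[OF _ openU z0U, of "\<lambda>z. 1 / p z - 1" _ w] wU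
      by auto
    have deq: "- deriv p z0 / (p z0)^2 = of_nat n * z0^(n-1) * g z0 + z0^n * deriv g z0"
      using DERIV_unique[OF d2 d1] .
    have "z0 * (- deriv p z0 / (p z0)^2) = of_nat n * (z0 * z0^(n-1)) * g z0 + z0^n * (z0 * deriv g z0)"
      unfolding deq by (simp add: algebra_simps)
    also have "z0 * z0^(n-1) = z0^n" using n1 by (metis Suc_diff_le diff_Suc_1 power_Suc)
    also have "z0 * deriv g z0 = of_real L * g z0" using Lz gz0 by (simp add: field_simps)
    finally have "z0 * (- deriv p z0 / (p z0)^2) = of_real (real n + L) * w z0"
      by (simp add: w_def algebra_simps)
    then have jk: "z0 * deriv p z0 = - of_real (real n + L) * (1 / p z0 - 1) * (p z0)^2"
      using wU[OF z0U] P0 by (simp add: field_simps)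
    have z0D: "z0 \<in> ball 0 1" using z0U UD by auto
    have "\<omega> z0 \<in> ball 0 1" using \<omega>D z0D by blast
    then have \<zeta>: "cmod (\<omega> z0) < 1" by simp
    show False
      using final_alg[OF P0 Rez0 \<zeta> \<beta> \<alpha> _ _ jk eqn[OF z0D], of "real n"] Q\<omega> z0D L0
      by simp
  qed
  show ?thesis
    unfolding subordinate_def
  proof (intro exI conjI)
    have pnz: "p z \<noteq> 0" if "z \<in> ball 0 1" for z using RE that by fastforce
    show "(\<lambda>z. 1 / p z - 1) holomorphic_on ball 0 1"
      using holp pnz by (intro holomorphic_intros) auto
    show "(\<lambda>z. 1 / p z - 1) ` ball 0 1 \<subseteq> ball 0 1"
      using RE pnz nrm_lt by auto
    show "1 / p 0 - 1 = 0" using p0 by simp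
    show "\<forall>z\<in>ball 0 1. p z = 1 / (1 + (1 / p z - 1))" using pnz by simp
  qed
qed

end
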